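(* The system $(X,\hat T)$ has zero topological entropy.
   Context: Let $\tau:\mathbb N\to(0,\infty)$ be non-increasing with $\tau(n)\to0$. Fix integers $2\le q_1<q_2<\cdots$ such that for every $k\ge1$: (i) $q_{k+1}>q_k^4+3q_k$; (ii) $\tau(\lceil q_{k+1}/3\rceil)<\frac1{16q_k}$. For $k\ge1$ put $q^{(0)}_k=q_{2k}$, $q^{(1)}_k=q_{2k+1}$, $q^{(2)}_k=q^{(0)}_k-1$, $q^{(3)}_k=q^{(1)}_k-1$, and $L^{(i)}_k=\lfloor q^{(i)}_{k+1}/(3q^{(i)}_k)\rfloor$. Let $s^{(i)}_k\in\{-1,0,1\}^{\mathbb N}$ (indices $n\ge1$) be given by $s^{(i)}_k(n)=1$ if $n=jq^{(i)}_k$ with $1\le j\le L^{(i)}_k$, $s^{(i)}_k(n)=-1$ if $n=jq^{(i)}_k$ with $L^{(i)}_k<j\le2L^{(i)}_k$, and $s^{(i)}_k(n)=0$ otherwise. For $w\in\{-1,0,1\}^{\mathbb N}$ and $p\in\mathbb N_0$ let $\sigma^{-p}w$ be defined by $(\sigma^{-p}w)(n)=0$ for $1\le n\le p$ and $(\sigma^{-p}w)(n)=w(n-p)$ for $n>p$. For $l\le m$ write $w|_l^m=(w_l,\dots,w_m)$. Let $R^{(i)}_k=\{(\sigma^{-p}s^{(i)}_k)|_{q^{(i)}_k}^{q^{(i)}_{k+1}-1}:p=0,1,\dots,q^{(i)}_k\}$ and $P^{(i)}=\{y\in\{-1,0,1\}^{\mathbb N}: y(n)=0\text{ for }1\le n<q^{(i)}_1,\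 y|_{q^{(i)}_k}^{q^{(i)}_{k+1}-1}\in R^{(i)}_k\text{ for all }k\ge1\}$. Let $Z=\{-1,0,1\}^{\mathbb N}\times\{-1,0,1\}^{\mathbb Z}$, where each factor carries the metric $d(u,v)=3^{-\min\{|m|:u_m\neq v_m\}}$ and $Z$ the maximum of the two. $\sigma$ is the left shift $(\sigma u)_m=u_{m+1}$ (invertible on $\{-1,0,1\}^{\mathbb Z}$). Define $T:Z\to Z$, $T(y,z)=(\sigma y,\sigma^{y_1}z)$, and $X_i=\overline{\bigcup_{n\ge0}T^n(P^{(i)}\times\{-1,0,1\}^{\mathbb Z})}$ for $i\in\{0,1,2,3\}$. Let $X=X_0\times X_1\times X_2\times X_3\times\{0,1,2,3\}$ with $\hat T(p^{(0)},p^{(1)},p^{(2)},p^{(3)},i)=(Tp^{(0)},Tp^{(1)},Tp^{(2)},Tp^{(3)},i)$. *)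

theory Defs
  imports "HOL-Analysis.Analysis"
begin

definition separated_set ::
  "('a \<Rightarrow> 'a \<Rightarrow> real) \<Rightarrow> ('a \<Rightarrow> 'a) \<Rightarrow> 'a set \<Rightarrow> nat \<Rightarrow> real \<Rightarrow> 'a set \<Rightarrow> bool" where
  "separated_set d f K n \<epsilon> S \<longleftrightarrow> S \<subseteq> K \<and> finite S \<and>
     (\<forall>x\<in>S. \<forall>y\<in>S. x \<noteq> y \<longrightarrow> (\<exists>i<n. \<epsilon> < d ((f ^^ i) x) ((f ^^ i) y)))"

definition max_sep ::
  "('a \<Rightarrow> 'a \<Rightarrow> real) \<Rightarrow> ('a \<Rightarrow> 'a) \<Rightarrow> 'a set \<Rightarrow> nat \<Rightarrow> real \<Rightarrow> nat" where
  "max_sep d f K n \<epsilon> = Sup {card S | S. separated_set d f K n \<epsilon> S}"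

definition topological_entropy ::
  "('a \<Rightarrow> 'a \<Rightarrow> real) \<Rightarrow> ('a \<Rightarrow> 'a) \<Rightarrow> 'a set \<Rightarrow> ereal" where
  "topological_entropy d f K =
     (SUP \<epsilon>\<in>{0<..}. limsup (\<lambda>n. ereal (ln (real (max_sep d f K n \<epsilon>)) / real n)))"

text \<open>One-sided sequences indexed by n \<ge> 1 are functions nat \<Rightarrow> int with the
  convention y 0 = 0; two-sided sequences are functions int \<Rightarrow> int.\<close>

definition trits1 :: "(nat \<Rightarrow> int) set" where
  "trits1 = {y. y 0 = 0 \<and> (\<forall>n. y n \<in> {-1, 0, 1})}"

definition trits2 :: "(int \<Rightarrow> int) set" where
  "trits2 = {z. \<forall>m. z m \<in> {-1, 0, 1}}"

definition d1 :: "(nat \<Rightarrow> int) \<Rightarrow> (nat \<Rightarrow> int) \<Rightarrow> real" where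
  "d1 u v = (if u = v then 0 else (1/3) ^ (LEAST m. u m \<noteq> v m))"

definition d2 :: "(int \<Rightarrow> int) \<Rightarrow> (int \<Rightarrow> int) \<Rightarrow> real" where
  "d2 u v = (if u = v then 0 else (1/3) ^ (LEAST k::nat. \<exists>m. \<bar>m\<bar> = int k \<and> u m \<noteq> v m))"

type_synonym zpt = "(nat \<Rightarrow> int) \<times> (int \<Rightarrow> int)"

definition Zsp :: "zpt set" where
  "Zsp = trits1 \<times> trits2"

definition dZ :: "zpt \<Rightarrow> zpt \<Rightarrow> real" where
  "dZ a b = max (d1 (fst a) (fst b)) (d2 (snd a) (snd b))"

definition shl1 :: "(nat \<Rightarrow> int) \<Rightarrow> (nat \<Rightarrow> int)" where
  "shl1 y = (\<lambda>n. if n = 0 then 0 else y (n + 1))"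

definition shl2 :: "int \<Rightarrow> (int \<Rightarrow> int) \<Rightarrow> (int \<Rightarrow> int)" where
  "shl2 j z = (\<lambda>m. z (m + j))"

definition Tmap :: "zpt \<Rightarrow> zpt" where
  "Tmap p = (shl1 (fst p), shl2 (fst p 1) (snd p))"

definition closureZ :: "zpt set \<Rightarrow> zpt set" where
  "closureZ A = {x \<in> Zsp. \<forall>e>0. \<exists>a\<in>A. dZ x a < e}"

definition qq :: "(nat \<Rightarrow> nat) \<Rightarrow> nat \<Rightarrow> nat \<Rightarrow> nat" where
  "qq q i k = (if i = 0 then q (2*k) else if i = 1 then q (2*k+1)
               else if i = 2 then q (2*k) - 1 else q (2*k+1) - 1)"

definition LL :: "(nat \<Rightarrow> nat) \<Rightarrow> nat \<Rightarrow> nat \<Rightarrow> nat" where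
  "LL q i k = qq q i (Suc k) div (3 * qq q i k)"

definition sk :: "(nat \<Rightarrow> nat) \<Rightarrow> nat \<Rightarrow> nat \<Rightarrow> nat \<Rightarrow> int" where
  "sk q i k n =
     (if n \<ge> 1 \<and> qq q i k dvd n \<and> 1 \<le> n div qq q i k \<and> n div qq q i k \<le> LL q i k then 1
      else if n \<ge> 1 \<and> qq q i k dvd n \<and> LL q i k < n div qq q i k \<and> n div qq q i k \<le> 2 * LL q i k then -1
      else 0)"

definition shr :: "nat \<Rightarrow> (nat \<Rightarrow> int) \<Rightarrow> (nat \<Rightarrow> int)" where
  "shr p w = (\<lambda>n. if n \<le> p then 0 else w (n - p))"

definition restr :: "(nat \<Rightarrow> int) \<Rightarrow> nat \<Rightarrow> nat \<Rightarrow> int list" where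
  "restr w l m = map w [l..<Suc m]"

definition RR :: "(nat \<Rightarrow> nat) \<Rightarrow> nat \<Rightarrow> nat \<Rightarrow> int list set" where
  "RR q i k = {restr (shr p (sk q i k)) (qq q i k) (qq q i (Suc k) - 1) | p. p \<le> qq q i k}"

definition PP :: "(nat \<Rightarrow> nat) \<Rightarrow> nat \<Rightarrow> (nat \<Rightarrow> int) set" where
  "PP q i = {y \<in> trits1. (\<forall>n. 1 \<le> n \<and> n < qq q i 1 \<longrightarrow> y n = 0) \<and>
              (\<forall>k\<ge>1. restr y (qq q i k) (qq q i (Suc k) - 1) \<in> RR q i k)}"

definition XX :: "(nat \<Rightarrow> nat) \<Rightarrow> nat \<Rightarrow> zpt set" where
  "XX q i = closureZ (\<Union>n. (Tmap ^^ n) ` (PP q i \<times> trits2))"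

type_synonym xpt = "zpt \<times> zpt \<times> zpt \<times> zpt \<times> nat"

definition Xhat :: "(nat \<Rightarrow> nat) \<Rightarrow> xpt set" where
  "Xhat q = {(a, b, c, e, i). a \<in> XX q 0 \<and> b \<in> XX q 1 \<and> c \<in> XX q 2 \<and> e \<in> XX q 3 \<and> i \<in> {0, 1, 2, 3}}"

definition That :: "xpt \<Rightarrow> xpt" where
  "That = (\<lambda>(a, b, c, e, i). (Tmap a, Tmap b, Tmap c, Tmap e, i))"

definition dX :: "xpt \<Rightarrow> xpt \<Rightarrow> real" where
  "dX = (\<lambda>(a, b, c, e, i) (a', b', c', e', i').
          max (max (dZ a a') (dZ b b')) (max (max (dZ c c') (dZ e e')) (if i = i' then 0 else 1)))"

end

theory Submission
  imports Defs
begin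


locale qseq =
  fixes q :: "nat \<Rightarrow> nat"
  assumes q1: "2 \<le> q 1" and qg: "\<forall>k\<ge>1. 4 * q k < q (Suc k)"
begin

lemma q_ge2: "1 \<le> k \<Longrightarrow> 2 \<le> q k"
proof (induction k rule: dec_induct)
  case base then show ?case using q1 by simp
next
  case (step n) then show ?case using qg by force
qed

lemma q_4: "1 \<le> k \<Longrightarrow> 4 * q k < q (Suc k)" using qg by blast

lemma Q_ge2: "1 \<le> k \<Longrightarrow> 2 \<le> qq q c k"
proof -
  assume k: "1 \<le> k"
  have a: "2 \<le> q (2*k)" "2 \<le> q (2*k+1)" using q_ge2 k by auto
  have b: "4 * q (2*k - 1) < q (2*k)" using q_4[of "2*k-1"] k by (simp add: Suc_diff_1)
  have c: "2 \<le> q (2*k-1)" using q_ge2 k by auto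
  have d: "4 * q (2*k) < q (2*k+1)" using q_4[of "2*k"] k by simp
  show ?thesis using a b c d by (auto simp: qq_def)
qed

lemma Q_double: "1 \<le> k \<Longrightarrow> 2 * qq q c k \<le> qq q c (Suc k)"
proof -
  assume k: "1 \<le> k"
  have a: "2 \<le> q (2*k)" "2 \<le> q (2*k+1)" using q_ge2 k by auto
  have b: "4 * q (2*k) < q (2*k+1)" using q_4[of "2*k"] k by simp
  have c: "4 * q (2*k+1) < q (2*k+2)" using q_4[of "2*k+1"] k by simp
  have d: "4 * q (Suc (Suc (2*k))) < q (Suc (Suc (Suc (2*k))))" using q_4[of "Suc (Suc (2*k))"] k by simp
  show ?thesis using a b c d by (auto simp: qq_def)
qed

lemma Q_less: "1 \<le> k \<Longrightarrow> k < l \<Longrightarrow> qq q c k < qq q c l"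
proof (induction l)
  case 0 then show ?case by simp
next
  case (Suc n)
  have "qq q c n < qq q c (Suc n)" using Q_double[of n c] Q_ge2[of n c] Suc.prems by simp
  then show ?case using Suc by (metis less_Suc_eq order.strict_trans)
qed

lemma Q_less_iff: "1 \<le> k \<Longrightarrow> 1 \<le> l \<Longrightarrow> qq q c k < qq q c l \<longleftrightarrow> k < l"
  by (metis Q_less linorder_neqE_nat order_less_asym)

lemma Q_le_iff: "1 \<le> k \<Longrightarrow> 1 \<le> l \<Longrightarrow> qq q c k \<le> qq q c l \<longleftrightarrow> k \<le> l"
  by (meson Q_less_iff not_le)

lemma Q_pow: "1 \<le> k \<Longrightarrow> 2 ^ k \<le> qq q c k"
proof (induction k rule: dec_induct)
  case base then show ?case using Q_ge2[of 1 c] by simp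
next
  case (step n) then show ?case using Q_double[of n c] by simp
qed

lemma Q_ub: "qq q c k \<le> q (2*k) + q (2*k+1)"
  by (auto simp: qq_def)

end


lemma Tmap_pow: "fst p 0 = 0 \<Longrightarrow> (Tmap ^^ i) p =
   ((\<lambda>n. if n = 0 then 0 else fst p (n + i)), shl2 (\<Sum>t\<in>{1..i}. fst p t) (snd p))"
proof (induction i)
  case 0
  then show ?case by (cases p) (auto simp: shl2_def)
next
  case (Suc i)
  have s: "(\<Sum>t\<in>{1..Suc i}. fst p t) = (\<Sum>t\<in>{1..i}. fst p t) + fst p (Suc i)"
    by (simp add: sum.cl_ivl_Suc)
  show ?case using Suc
    by (auto simp: Tmap_def shl1_def shl2_def s algebra_simps intro!: ext)
qed

lemma That_pow: "(That ^^ i) (a, b, c, e, j) = ((Tmap ^^ i) a, (Tmap ^^ i) b, (Tmap ^^ i) c, (Tmap ^^ i) e, j)"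
  by (induction i) (auto simp: That_def)

lemma d1_small: assumes "d1 u v < (1/3)^M" "m \<le> M" shows "u m = v m"
proof (rule ccontr)
  assume ne: "u m \<noteq> v m"
  then have uv: "u \<noteq> v" by auto
  let ?m0 = "LEAST m. u m \<noteq> v m"
  have "?m0 \<le> m" using ne by (rule Least_le)
  have "(1/3::real)^?m0 < (1/3)^M" using assms(1) uv by (simp add: d1_def)
  then have "M < ?m0" by (simp add: power_strict_decreasing_iff)
  then show False using \<open>?m0 \<le> m\<close> assms(2) by simp
qed

lemma d1_le: assumes "\<forall>m\<le>r. u m = v m" shows "d1 u v \<le> (1/3)^(Suc r)"
proof (cases "u = v")
  case True then show ?thesis by (simp add: d1_def)
next
  case False
  then obtain m where m: "u m \<noteq> v m" by auto
  let ?m0 = "LEAST m. u m \<noteq> v m"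
  have "u ?m0 \<noteq> v ?m0" using m by (rule LeastI)
  then have "Suc r \<le> ?m0" using assms by (meson not_less_eq_eq)
  then have "(1/3::real)^?m0 \<le> (1/3)^(Suc r)" by (intro power_decreasing) auto
  then show ?thesis using False by (simp add: d1_def)
qed

lemma d2_le: assumes "\<forall>m. \<bar>m\<bar> \<le> int r \<longrightarrow> u m = v m" shows "d2 u v \<le> (1/3)^(Suc r)"
proof (cases "u = v")
  case True then show ?thesis by (simp add: d2_def)
next
  case False
  then obtain m where m: "u m \<noteq> v m" by auto
  let ?P = "\<lambda>k::nat. \<exists>m. \<bar>m\<bar> = int k \<and> u m \<noteq> v m"
  have "?P (nat \<bar>m\<bar>)" using m by auto
  then have "?P (LEAST k. ?P k)" by (rule LeastI)
  then obtain m' where m': "\<bar>m'\<bar> = int (LEAST k. ?P k)" "u m' \<noteq> v m'" by blast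
  then have "Suc r \<le> (LEAST k. ?P k)" using assms by force
  then have "(1/3::real)^(LEAST k. ?P k) \<le> (1/3)^(Suc r)" by (intro power_decreasing) auto
  then show ?thesis using False by (simp add: d2_def)
qed

lemma XX_rep:
  assumes "(y, z) \<in> XX q c"
  shows "y \<in> trits1" "z \<in> trits2"
    "\<exists>y0\<in>PP q c. \<exists>a. \<forall>t. 1 \<le> t \<longrightarrow> t \<le> M \<longrightarrow> y t = y0 (a + t)"
proof -
  have in1: "(y, z) \<in> Zsp" and cl: "\<forall>e>0. \<exists>x\<in>(\<Union>n. (Tmap ^^ n) ` (PP q c \<times> trits2)). dZ (y, z) x < e"
    using assms by (auto simp: XX_def closureZ_def)
  show "y \<in> trits1" "z \<in> trits2" using in1 by (auto simp: Zsp_def)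
  obtain x where x: "x \<in> (\<Union>n. (Tmap ^^ n) ` (PP q c \<times> trits2))" "dZ (y, z) x < (1/3)^M"
    using cl by (meson divide_pos_pos zero_less_numeral zero_less_one zero_less_power)
  then obtain j y0 z0 where j: "y0 \<in> PP q c" "x = (Tmap ^^ j) (y0, z0)" by auto
  have y00: "y0 0 = 0" using j(1) by (auto simp: PP_def trits1_def)
  have fx: "fst x = (\<lambda>n. if n = 0 then 0 else y0 (n + j))" using j(2) Tmap_pow[of "(y0,z0)" j] y00 by (auto simp: fun_eq_iff)
  have "d1 y (fst x) < (1/3)^M" using x(2) by (simp add: dZ_def)
  then have "\<forall>t. 1 \<le> t \<longrightarrow> t \<le> M \<longrightarrow> y t = y0 (j + t)"
    using d1_small fx by (metis add.commute not_one_le_zero)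
  then show "\<exists>y0\<in>PP q c. \<exists>a. \<forall>t. 1 \<le> t \<longrightarrow> t \<le> M \<longrightarrow> y t = y0 (a + t)" using j(1) by blast
qed



lemma mod_lcancel: "((a::nat) + x) mod Q = (a + y) mod Q \<longleftrightarrow> x mod Q = y mod Q"
  by (simp add: nat_mod_eq_iff)


definition cb :: "nat \<times> nat \<times> nat \<times> nat \<times> nat \<Rightarrow> nat \<Rightarrow> int" where
  "cb = (\<lambda>(d, r, u, v, w) t. if t mod d = r \<and> u \<le> t \<and> t \<le> w then (if t \<le> v then 1 else -1) else 0)"

definition Th :: "nat \<Rightarrow> (nat \<times> nat \<times> nat \<times> nat \<times> nat) set" where
  "Th M = {0..M+1} \<times> {0..M+1} \<times> {0..M+1} \<times> {0..M+1} \<times> {0..M+1}"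

lemma card_Th: "card (Th M) = (M + 2) ^ 5"
  by (simp add: Th_def card_cartesian_product eval_nat_numeral)

lemma finite_Th: "finite (Th M)" by (simp add: Th_def)

lemma res_shift:
  fixes Q a p t :: nat assumes "1 \<le> Q"
  shows "(a + t) mod Q = p mod Q \<longleftrightarrow> t mod Q = (p + Q - a mod Q) mod Q"
proof -
  let ?r = "(p + Q - a mod Q) mod Q"
  have "(a + ?r) mod Q = (a mod Q + (p + Q - a mod Q)) mod Q"
    by (metis mod_add_left_eq mod_add_right_eq)
  also have "\<dots> = (p + Q) mod Q"
  proof -
    have "a mod Q < Q" using assms by simp
    then have "a mod Q + (p + Q - a mod Q) = p + Q" by simp
    then show ?thesis by simp
  qed
  also have "\<dots> = p mod Q" by simp
  finally have ar: "(a + ?r) mod Q = p mod Q" .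
  have "(a + t) mod Q = p mod Q \<longleftrightarrow> (a + t) mod Q = (a + ?r) mod Q"
    using ar by simp
  also have "\<dots> \<longleftrightarrow> t mod Q = ?r mod Q" by (rule mod_lcancel)
  finally show ?thesis by simp
qed

lemma piece_cb:
  fixes Q Qk Qk1 p a M A B C :: nat
  assumes Q: "1 \<le> Q" and Qk1: "1 \<le> Qk1"
  shows "\<exists>\<theta>\<in>Th M. \<forall>t. 1 \<le> t \<longrightarrow> t \<le> M \<longrightarrow>
     (if Qk \<le> a+t \<and> a+t < Qk1 \<and> (a+t) mod Q = p mod Q \<and> A \<le> a+t \<and> a+t \<le> C
      then (if a+t \<le> B then 1 else -1) else (0::int)) = cb \<theta> t"
proof -
  define lo where "lo = max Qk A"
  define hi where "hi = min (Qk1 - 1) C"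
  define r where "r = (p + Q - a mod Q) mod Q"
  define \<theta> where "\<theta> = (min Q (M+1), min r (M+1), min (M+1) (lo - a), min M (B - a), min M (hi - a))"
  have "\<theta> \<in> Th M" by (auto simp: \<theta>_def Th_def)
  moreover have "(if Qk \<le> a+t \<and> a+t < Qk1 \<and> (a+t) mod Q = p mod Q \<and> A \<le> a+t \<and> a+t \<le> C
      then (if a+t \<le> B then 1 else -1) else (0::int)) = cb \<theta> t" if t: "1 \<le> t" "t \<le> M" for t
  proof -
    have m1: "(a + t) mod Q = p mod Q \<longleftrightarrow> t mod Q = r" using res_shift[OF Q] r_def by simp
    have m2: "t mod Q = r \<longleftrightarrow> t mod (min Q (M+1)) = min r (M+1)"
    proof (cases "Q \<le> M + 1")
      case True
      have "r < Q" using Q by (simp add: r_def)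
      then show ?thesis using True by simp
    next
      case False
      then show ?thesis using t by auto
    qed
    have l1: "(Qk \<le> a+t \<and> a+t < Qk1 \<and> A \<le> a+t \<and> a+t \<le> C) \<longleftrightarrow>
        (min (M+1) (lo - a) \<le> t \<and> t \<le> min M (hi - a))"
      using t Qk1 unfolding lo_def hi_def by auto
    have l2: "a + t \<le> B \<longleftrightarrow> t \<le> min M (B - a)" using t by auto
    show ?thesis unfolding cb_def \<theta>_def using m1 m2 l1 l2 by auto
  qed
  ultimately show ?thesis by blast
qed

lemma card_res:
  fixes Q a c i :: nat assumes "1 \<le> Q"
  shows "card {t\<in>{1..i}. (a + t) mod Q = c} \<le> i div Q + 1"
proof -
  let ?S = "{t\<in>{1..i}. (a + t) mod Q = c}"
  have inj: "inj_on (\<lambda>t. t div Q) ?S"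
  proof (rule inj_onI)
    fix x y assume x: "x \<in> ?S" and y: "y \<in> ?S" and e: "x div Q = y div Q"
    have "(a + x) mod Q = (a + y) mod Q" using x y by simp
    then have "x mod Q = y mod Q" by (simp add: mod_lcancel)
    then show "x = y" using e by (metis div_mult_mod_eq)
  qed
  have "(\<lambda>t. t div Q) ` ?S \<subseteq> {0..i div Q}" by (auto intro: div_le_mono)
  then have "card ((\<lambda>t. t div Q) ` ?S) \<le> i div Q + 1"
    by (metis card_atLeastAtMost card_mono finite_atLeastAtMost minus_nat.diff_0 Suc_eq_plus1)
  then show ?thesis using card_image[OF inj] by simp
qed





lemma pow_le_imp: "2^k \<le> (M::nat) \<Longrightarrow> k \<le> M"
proof -
  assume "2^k \<le> M"
  moreover have "k < 2^k" by (rule less_exp)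
  ultimately show ?thesis by linarith
qed

lemma abs_sum_card:
  fixes f :: "nat \<Rightarrow> real"
  assumes "finite A" "\<And>t. \<bar>f t\<bar> \<le> 1"
  shows "\<bar>\<Sum>t\<in>A. f t\<bar> \<le> card {t\<in>A. f t \<noteq> 0}"
proof -
  have "(\<Sum>t\<in>A. f t) = (\<Sum>t\<in>{t\<in>A. f t \<noteq> 0}. f t)"
    using assms(1) by (intro sum.mono_neutral_cong_right) auto
  also have "\<bar>\<dots>\<bar> \<le> (\<Sum>t\<in>{t\<in>A. f t \<noteq> 0}. \<bar>f t\<bar>)" by (rule sum_abs)
  also have "\<dots> \<le> (\<Sum>t\<in>{t\<in>A. f t \<noteq> 0}. 1)" using assms(2) by (intro sum_mono) auto
  finally show ?thesis by simp
qed

definition Kb :: "nat \<Rightarrow> nat" where "Kb M = card {k. 1 \<le> k \<and> 2 ^ k \<le> M}"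

lemma finite_pow_set: "finite {k. 1 \<le> k \<and> 2 ^ k \<le> (M::nat)}"
  proof (rule finite_subset[of _ "{..M}"])
  show "{k. 1 \<le> k \<and> 2 ^ k \<le> M} \<subseteq> {..M}"
  proof
    fix k assume "k \<in> {k. 1 \<le> k \<and> 2 ^ k \<le> M}"
    then show "k \<in> {..M}" using pow_le_imp by blast
  qed
qed auto


context qseq
begin

lemma PP_trit: "y0 \<in> PP q c \<Longrightarrow> y0 n \<in> {-1, 0, 1}"
  by (auto simp: PP_def trits1_def)

lemma PP_zero: "y0 \<in> PP q c \<Longrightarrow> n < qq q c 1 \<Longrightarrow> y0 n = 0"
  by (cases n) (auto simp: PP_def trits1_def)

lemma PP_block:
  assumes "y0 \<in> PP q c" "1 \<le> k"
  shows "\<exists>p. \<forall>n. qq q c k \<le> n \<longrightarrow> n < qq q c (Suc k) \<longrightarrow> y0 n = shr p (sk q c k) n"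
proof -
  have "restr y0 (qq q c k) (qq q c (Suc k) - 1) \<in> RR q c k" using assms by (auto simp: PP_def)
  then obtain p where p: "restr y0 (qq q c k) (qq q c (Suc k) - 1) = restr (shr p (sk q c k)) (qq q c k) (qq q c (Suc k) - 1)"
    by (auto simp: RR_def)
  have "2 \<le> qq q c (Suc k)" using Q_ge2[of "Suc k" c] by simp
  then have "Suc (qq q c (Suc k) - 1) = qq q c (Suc k)" by simp
  then have "map y0 [qq q c k..<qq q c (Suc k)] = map (shr p (sk q c k)) [qq q c k..<qq q c (Suc k)]"
    using p by (simp add: restr_def)
  then show ?thesis by (auto simp: map_eq_conv)
qed

lemma ap_facts:
  fixes Q j m L :: nat
  assumes "1 \<le> Q" "m = Q * j"
  shows "(1 \<le> j \<longleftrightarrow> Q \<le> m) \<and> (j \<le> L \<longleftrightarrow> m \<le> L * Q) \<and> (j \<le> 2 * L \<longleftrightarrow> m \<le> 2 * L * Q)"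
  using assms by (auto simp: mult.commute)

lemma shr_sk:
  assumes k: "1 \<le> k"
  shows "shr p (sk q c k) n = (if n mod qq q c k = p mod qq q c k \<and> p + qq q c k \<le> n \<and> n \<le> p + 2 * LL q c k * qq q c k
      then (if n \<le> p + LL q c k * qq q c k then 1 else -1) else 0)"
proof -
  define Q where "Q = qq q c k"
  define L where "L = LL q c k"
  have Q: "2 \<le> Q" using Q_ge2[OF k] by (simp add: Q_def)
  show ?thesis
  proof (cases "n \<le> p")
    case True
    then show ?thesis using Q by (auto simp: shr_def Q_def[symmetric] L_def[symmetric])
  next
    case False
    define m where "m = n - p"
    have nm: "n = p + m" using False by (simp add: m_def)
    have dv: "Q dvd m \<longleftrightarrow> n mod Q = p mod Q" using mod_eq_dvd_iff_nat[of p n Q] False by (simp add: m_def)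
    show ?thesis
    proof (cases "Q dvd m")
      case True
      then obtain j where j: "m = Q * j" by auto
      have jd: "m div Q = j" using j Q by simp
      have af: "(1 \<le> j \<longleftrightarrow> Q \<le> m) \<and> (j \<le> L \<longleftrightarrow> m \<le> L * Q) \<and> (j \<le> 2 * L \<longleftrightarrow> m \<le> 2 * L * Q)"
        using ap_facts[of Q m j L] Q j by simp
      have "shr p (sk q c k) n = sk q c k m" using False by (simp add: shr_def m_def)
      also have "\<dots> = (if Q \<le> m \<and> m \<le> 2 * L * Q then (if m \<le> L * Q then 1 else -1) else 0)"
        using True jd af Q unfolding sk_def Q_def[symmetric] L_def[symmetric] by auto
      finally show ?thesis using True dv nm unfolding Q_def[symmetric] L_def[symmetric] by auto
    next
      case nd: False
      have "shr p (sk q c k) n = 0" using False nd by (simp add: shr_def sk_def m_def Q_def)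
      then show ?thesis using nd dv unfolding Q_def[symmetric] L_def[symmetric] by auto
    qed
  qed
qed

lemma block_piece:
  assumes "y0 \<in> PP q c" "1 \<le> k"
  shows "\<exists>\<theta>\<in>Th M. \<forall>t. 1 \<le> t \<longrightarrow> t \<le> M \<longrightarrow>
     (if qq q c k \<le> a+t \<and> a+t < qq q c (Suc k) then y0 (a+t) else 0) = cb \<theta> t"
proof -
  obtain p where p: "\<forall>n. qq q c k \<le> n \<longrightarrow> n < qq q c (Suc k) \<longrightarrow> y0 n = shr p (sk q c k) n"
    using PP_block[OF assms] by blast
  define Q where "Q = qq q c k"
  define L where "L = LL q c k"
  have Q: "1 \<le> Q" using Q_ge2[of k c] assms(2) by (simp add: Q_def)
  have Q1: "1 \<le> qq q c (Suc k)" using Q_ge2[of "Suc k" c] by simp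
  obtain \<theta> where th: "\<theta> \<in> Th M" and e: "\<forall>t. 1 \<le> t \<longrightarrow> t \<le> M \<longrightarrow>
     (if Q \<le> a+t \<and> a+t < qq q c (Suc k) \<and> (a+t) mod Q = p mod Q \<and> p + Q \<le> a+t \<and> a+t \<le> p + 2 * L * Q
      then (if a+t \<le> p + L * Q then 1 else -1) else (0::int)) = cb \<theta> t"
    using piece_cb[OF Q Q1, of M Q a p "p + Q" "p + 2 * L * Q" "p + L * Q"] by blast
  have "(if qq q c k \<le> a+t \<and> a+t < qq q c (Suc k) then y0 (a+t) else 0) = cb \<theta> t" if "1 \<le> t" "t \<le> M" for t
    using e[rule_format, OF that] p shr_sk[OF assms(2), where p=p and n="a+t" and c=c] unfolding Q_def[symmetric] L_def[symmetric]
    by (auto split: if_splits)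
  then show ?thesis using th by blast
qed

lemma block_count:
  assumes "y0 \<in> PP q c" "1 \<le> k"
  shows "card {t\<in>{1..i}. (if qq q c k \<le> a+t \<and> a+t < qq q c (Suc k) then y0 (a+t) else 0) \<noteq> 0} \<le> i div qq q c k + 1"
proof -
  obtain p where p: "\<forall>n. qq q c k \<le> n \<longrightarrow> n < qq q c (Suc k) \<longrightarrow> y0 n = shr p (sk q c k) n"
    using PP_block[OF assms] by blast
  have Q: "1 \<le> qq q c k" using Q_ge2[of k c] assms(2) by simp
  have "{t\<in>{1..i}. (if qq q c k \<le> a+t \<and> a+t < qq q c (Suc k) then y0 (a+t) else 0) \<noteq> 0}
      \<subseteq> {t\<in>{1..i}. (a + t) mod qq q c k = p mod qq q c k}"
    using p shr_sk[OF assms(2)] by (auto split: if_splits)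
  then have "card {t\<in>{1..i}. (if qq q c k \<le> a+t \<and> a+t < qq q c (Suc k) then y0 (a+t) else 0) \<noteq> 0}
      \<le> card {t\<in>{1..i}. (a + t) mod qq q c k = p mod qq q c k}"
    by (intro card_mono) auto
  also have "\<dots> \<le> i div qq q c k + 1" by (rule card_res[OF Q])
  finally show ?thesis .
qed

lemma block_exists:
  assumes "qq q c 1 \<le> n"
  shows "\<exists>k\<ge>1. qq q c k \<le> n \<and> n < qq q c (Suc k)"
proof -
  let ?S = "{k. 1 \<le> k \<and> qq q c k \<le> n}"
  have fin: "finite ?S"
  proof (rule finite_subset)
    show "?S \<subseteq> {..n}"
    proof
      fix k assume "k \<in> ?S"
      then have "2^k \<le> n" using Q_pow[of k c] by auto
      then show "k \<in> {..n}" using pow_le_imp by blast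
    qed
  qed auto
  have ne: "1 \<in> ?S" using assms by simp
  define k where "k = Max ?S"
  have k: "k \<in> ?S" unfolding k_def by (rule Max_in[OF fin]) (use ne in blast)
  have "n < qq q c (Suc k)"
  proof (rule ccontr)
    assume "\<not> n < qq q c (Suc k)"
    then have "Suc k \<in> ?S" by simp
    then have "Suc k \<le> k" using fin by (simp add: k_def)
    then show False by simp
  qed
  then show ?thesis using k by blast
qed

lemma block_unique:
  assumes "1 \<le> k" "1 \<le> k'" "qq q c k \<le> n" "n < qq q c (Suc k)" "qq q c k' \<le> n" "n < qq q c (Suc k')"
  shows "k = k'"
proof (rule ccontr)
  assume "k \<noteq> k'"
  then consider "k < k'" | "k' < k" by linarith
  then show False
  proof cases
    case 1
    then have "qq q c (Suc k) \<le> qq q c k'" using Q_le_iff[of "Suc k" k' c] assms by simp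
    then show False using assms by simp
  next
    case 2
    then have "qq q c (Suc k') \<le> qq q c k" using Q_le_iff[of "Suc k'" k c] assms by simp
    then show False using assms by simp
  qed
qed


end





context qseq
begin

lemma window:
  assumes y0: "y0 \<in> PP q c"
  obtains T where "finite T" "card T \<le> Kb M + 2" "\<forall>k\<in>T. 1 \<le> k"
    "\<forall>t. 1 \<le> t \<longrightarrow> t \<le> M \<longrightarrow> y0 (a+t) =
        (\<Sum>k\<in>T. (if qq q c k \<le> a+t \<and> a+t < qq q c (Suc k) then y0 (a+t) else 0))"
proof -
  define T where "T = {k. 1 \<le> k \<and> qq q c k \<le> a + M \<and> a + 1 < qq q c (Suc k)}"
  have fin: "finite T"
  proof (rule finite_subset)
    show "T \<subseteq> {..a+M}"
    proof
      fix k assume "k \<in> T"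
      then have "2^k \<le> a + M" using Q_pow[of k c] by (auto simp: T_def)
      then show "k \<in> {..a+M}" using pow_le_imp by simp
    qed
  qed auto
  have pos: "\<forall>k\<in>T. 1 \<le> k" by (auto simp: T_def)
  have sum: "y0 (a+t) = (\<Sum>k\<in>T. (if qq q c k \<le> a+t \<and> a+t < qq q c (Suc k) then y0 (a+t) else 0))"
    if t: "1 \<le> t" "t \<le> M" for t
  proof (cases "a + t < qq q c 1")
    case True
    have z: "y0 (a+t) = 0" using PP_zero[OF y0 True] .
    have "\<forall>k\<in>T. \<not> qq q c k \<le> a + t"
    proof
      fix k assume "k \<in> T"
      then have "qq q c 1 \<le> qq q c k" using Q_le_iff[of 1 k c] by (auto simp: T_def)
      then show "\<not> qq q c k \<le> a + t" using True by simp
    qed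
    then show ?thesis using z by simp
  next
    case False
    then obtain k where k: "1 \<le> k" "qq q c k \<le> a+t" "a+t < qq q c (Suc k)"
      using block_exists[of c "a+t"] by auto
    have kT: "k \<in> T" using k t by (auto simp: T_def)
    have "(\<Sum>k\<in>T. (if qq q c k \<le> a+t \<and> a+t < qq q c (Suc k) then y0 (a+t) else 0))
        = (if qq q c k \<le> a+t \<and> a+t < qq q c (Suc k) then y0 (a+t) else 0)"
    proof (rule sum.remove[OF fin kT, THEN trans], simp, rule sum.neutral, rule ballI)
      fix k' assume "k' \<in> T - {k}"
      then have "k' \<noteq> k" "1 \<le> k'" by (auto simp: T_def)
      then show "(if qq q c k' \<le> a+t \<and> a+t < qq q c (Suc k') then y0 (a+t) else 0) = 0"
        using block_unique[of k k' c "a+t"] k by auto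
    qed
    then show ?thesis using k by simp
  qed
  have card: "card T \<le> Kb M + 2"
  proof (cases "T = {}")
    case True then show ?thesis by simp
  next
    case False
    define m where "m = Min T"
    define x where "x = Max T"
    have mT: "m \<in> T" and xT: "x \<in> T" using fin False by (auto simp: m_def x_def)
    have sub: "T \<subseteq> {k. 1 \<le> k \<and> 2 ^ k \<le> M} \<union> {m, x}"
    proof
      fix k assume kT: "k \<in> T"
      show "k \<in> {k. 1 \<le> k \<and> 2 ^ k \<le> M} \<union> {m, x}"
      proof (cases "k = m \<or> k = x")
        case True then show ?thesis by auto
      next
        case False
        have "m \<le> k" "k \<le> x" using fin kT by (auto simp: m_def x_def)
        then have mk: "m < k" "k < x" using False by auto
        have k1: "1 \<le> k" "1 \<le> m" "1 \<le> x" using kT mT xT by (auto simp: T_def)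
        have "qq q c (Suc m) \<le> qq q c k" using Q_le_iff[of "Suc m" k c] mk k1 by simp
        moreover have "a + 1 < qq q c (Suc m)" using mT by (simp add: T_def)
        moreover have "qq q c (Suc k) \<le> qq q c x" using Q_le_iff[of "Suc k" x c] mk k1 by simp
        moreover have "qq q c x \<le> a + M" using xT by (simp add: T_def)
        moreover have "2 * qq q c k \<le> qq q c (Suc k)" using Q_double[of k c] k1 by simp
        ultimately have "qq q c k \<le> M" by linarith
        then have "2 ^ k \<le> M" using Q_pow[of k c] k1 by linarith
        then show ?thesis using k1 by simp
      qed
    qed
    have "card T \<le> card ({k. 1 \<le> k \<and> 2 ^ k \<le> M} \<union> {m, x})"
      using sub finite_pow_set by (intro card_mono) auto
    also have "\<dots> \<le> card {k. 1 \<le> k \<and> 2 ^ k \<le> M} + card {m, x}" by (rule card_Un_le)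
    also have "card {m, x} \<le> 2" by (cases "m = x") auto
    finally show ?thesis by (simp add: Kb_def)
  qed
  show ?thesis using that fin card pos sum by blast
qed

lemma word_rep:
  assumes y0: "y0 \<in> PP q c"
  shows "\<exists>ls. length ls = Kb M + 2 \<and> set ls \<subseteq> Th M \<and>
    (\<forall>t. 1 \<le> t \<longrightarrow> t \<le> M \<longrightarrow> y0 (a+t) = sum_list (map (\<lambda>\<theta>. cb \<theta> t) ls))"
proof -
  obtain T where fin: "finite T" and card: "card T \<le> Kb M + 2" and pos: "\<forall>k\<in>T. 1 \<le> k"
    and sum: "\<forall>t. 1 \<le> t \<longrightarrow> t \<le> M \<longrightarrow> y0 (a+t) =
        (\<Sum>k\<in>T. (if qq q c k \<le> a+t \<and> a+t < qq q c (Suc k) then y0 (a+t) else 0))"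
    using window[OF y0, of M a] by blast
  have "\<forall>k\<in>T. \<exists>\<theta>. \<theta> \<in> Th M \<and> (\<forall>t. 1 \<le> t \<longrightarrow> t \<le> M \<longrightarrow>
     (if qq q c k \<le> a+t \<and> a+t < qq q c (Suc k) then y0 (a+t) else 0) = cb \<theta> t)"
    using block_piece[OF y0] pos by blast
  then obtain th where th: "\<forall>k\<in>T. th k \<in> Th M \<and> (\<forall>t. 1 \<le> t \<longrightarrow> t \<le> M \<longrightarrow>
     (if qq q c k \<le> a+t \<and> a+t < qq q c (Suc k) then y0 (a+t) else 0) = cb (th k) t)"
    by metis
  define \<theta>0 where "\<theta>0 = (1::nat, 0::nat, M+1, 0::nat, 0::nat)"
  define ls where "ls = map th (sorted_list_of_set T) @ replicate (Kb M + 2 - card T) \<theta>0"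
  have len: "length ls = Kb M + 2" using card fin by (simp add: ls_def)
  have st: "set ls \<subseteq> Th M" using th fin by (auto simp: ls_def \<theta>0_def Th_def)
  have "y0 (a+t) = sum_list (map (\<lambda>\<theta>. cb \<theta> t) ls)" if t: "1 \<le> t" "t \<le> M" for t
  proof -
    have z: "cb \<theta>0 t = 0" using t by (simp add: cb_def \<theta>0_def)
    have "sum_list (map (\<lambda>\<theta>. cb \<theta> t) ls) = sum_list (map (\<lambda>k. cb (th k) t) (sorted_list_of_set T))"
      using z by (simp add: ls_def o_def sum_list_replicate)
    also have "\<dots> = (\<Sum>k\<in>T. cb (th k) t)"
      using fin by (simp add: sum_list_distinct_conv_sum_set)
    also have "\<dots> = (\<Sum>k\<in>T. (if qq q c k \<le> a+t \<and> a+t < qq q c (Suc k) then y0 (a+t) else 0))"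
      using th t by (intro sum.cong) auto
    finally show ?thesis using sum t by simp
  qed
  then show ?thesis using len st by blast
qed

end



context qseq
begin

lemma geo: "1 \<le> k0 \<Longrightarrow> (\<Sum>k\<in>{k0..<k0+j}. 1 / real (qq q c k)) \<le> 2 / real (qq q c k0) - 2 / real (qq q c (k0+j))"
proof (induction j)
  case 0 then show ?case by simp
next
  case (Suc j)
  have p: "0 < real (qq q c (k0+j))" using Q_ge2[of "k0+j" c] Suc.prems by simp
  have d: "2 * real (qq q c (k0+j)) \<le> real (qq q c (Suc (k0+j)))"
    using Q_double[of "k0+j" c] Suc.prems by linarith
  have "2 / real (qq q c (Suc (k0+j))) \<le> 1 / real (qq q c (k0+j))"
    using p d by (simp add: field_simps)
  then show ?case using Suc by simp
qed

lemma sum_inv_Q: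
  assumes "finite F" "\<forall>k\<in>F. k0 \<le> k" "1 \<le> k0"
  shows "(\<Sum>k\<in>F. 1 / real (qq q c k)) \<le> 2 / real (qq q c k0)"
proof -
  obtain N where N: "\<forall>k\<in>F. k < N" using assms(1) by (metis finite_nat_set_iff_bounded)
  have "F \<subseteq> {k0..<k0+N}" using N assms(2) by auto
  then have "(\<Sum>k\<in>F. 1 / real (qq q c k)) \<le> (\<Sum>k\<in>{k0..<k0+N}. 1 / real (qq q c k))"
    by (intro sum_mono2) auto
  also have "\<dots> \<le> 2 / real (qq q c k0) - 2 / real (qq q c (k0+N))" by (rule geo[OF assms(3)])
  also have "\<dots> \<le> 2 / real (qq q c k0)" by simp
  finally show ?thesis .
qed

lemma at_most_one:
  assumes y0: "y0 \<in> PP q c" and fin: "finite F" and pos: "\<forall>k\<in>F. 1 \<le> k"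
  shows "\<bar>\<Sum>k\<in>F. real_of_int (if qq q c k \<le> n \<and> n < qq q c (Suc k) then y0 n else 0)\<bar> \<le> 1"
proof (cases "\<exists>k\<in>F. qq q c k \<le> n \<and> n < qq q c (Suc k)")
  case True
  then obtain k where k: "k \<in> F" "qq q c k \<le> n" "n < qq q c (Suc k)" by blast
  have "(\<Sum>k\<in>F. real_of_int (if qq q c k \<le> n \<and> n < qq q c (Suc k) then y0 n else 0))
      = real_of_int (y0 n)"
  proof (rule sum.remove[OF fin k(1), THEN trans])
    have "(\<Sum>k'\<in>F - {k}. real_of_int (if qq q c k' \<le> n \<and> n < qq q c (Suc k') then y0 n else 0)) = 0"
    proof (rule sum.neutral, rule ballI)
      fix k' assume "k' \<in> F - {k}"
      then have "k' \<noteq> k" "1 \<le> k'" using pos by auto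
      then show "real_of_int (if qq q c k' \<le> n \<and> n < qq q c (Suc k') then y0 n else 0) = 0"
        using block_unique[of k k' c n] k pos by auto
    qed
    then show "real_of_int (if qq q c k \<le> n \<and> n < qq q c (Suc k) then y0 n else 0) +
      (\<Sum>k'\<in>F - {k}. real_of_int (if qq q c k' \<le> n \<and> n < qq q c (Suc k') then y0 n else 0)) =
      real_of_int (y0 n)" using k by simp
  qed
  moreover have "y0 n \<in> {-1, 0, 1}" by (rule PP_trit[OF y0])
  ultimately show ?thesis by auto
next
  case False
  then show ?thesis by (subst sum.neutral) auto
qed

lemma drift:
  assumes y0: "y0 \<in> PP q c" and k0: "1 \<le> k0"
  shows "\<bar>\<Sum>t\<in>{1..i}. real_of_int (y0 (a+t))\<bar>
     \<le> real (qq q c k0) + 2 * real i / real (qq q c k0) + real (Kb i) + 2"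
proof -
  obtain T where fin: "finite T" and card: "card T \<le> Kb i + 2" and pos: "\<forall>k\<in>T. 1 \<le> k"
    and sum: "\<forall>t. 1 \<le> t \<longrightarrow> t \<le> i \<longrightarrow> y0 (a+t) =
        (\<Sum>k\<in>T. (if qq q c k \<le> a+t \<and> a+t < qq q c (Suc k) then y0 (a+t) else 0))"
    using window[OF y0, of i a] by blast
  define P where "P k t = real_of_int (if qq q c k \<le> a+t \<and> a+t < qq q c (Suc k) then y0 (a+t) else 0)" for k t
  define T1 where "T1 = T \<inter> {..<k0}"
  define T2 where "T2 = T - {..<k0}"
  have "(\<Sum>t\<in>{1..i}. real_of_int (y0 (a+t))) = (\<Sum>t\<in>{1..i}. \<Sum>k\<in>T. P k t)"
  proof (rule sum.cong[OF refl])
    fix t assume "t \<in> {1..i}"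
    then have "y0 (a+t) = (\<Sum>k\<in>T. (if qq q c k \<le> a+t \<and> a+t < qq q c (Suc k) then y0 (a+t) else 0))"
      using sum by auto
    then show "real_of_int (y0 (a+t)) = (\<Sum>k\<in>T. P k t)" by (simp add: P_def of_int_sum[symmetric])
  qed
  also have "\<dots> = (\<Sum>k\<in>T. \<Sum>t\<in>{1..i}. P k t)" by (rule sum.swap)
  also have "\<dots> = (\<Sum>k\<in>T1. \<Sum>t\<in>{1..i}. P k t) + (\<Sum>k\<in>T2. \<Sum>t\<in>{1..i}. P k t)"
    unfolding T1_def T2_def by (rule sum.Int_Diff[OF fin])
  finally have e: "(\<Sum>t\<in>{1..i}. real_of_int (y0 (a+t))) = (\<Sum>k\<in>T1. \<Sum>t\<in>{1..i}. P k t) + (\<Sum>k\<in>T2. \<Sum>t\<in>{1..i}. P k t)" .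
  have fin1: "finite T1" "finite T2" using fin by (auto simp: T1_def T2_def)
  have A: "\<bar>\<Sum>k\<in>T1. \<Sum>t\<in>{1..i}. P k t\<bar> \<le> real (qq q c k0)"
  proof -
    have "(\<Sum>k\<in>T1. \<Sum>t\<in>{1..i}. P k t) = (\<Sum>t\<in>{1..i}. \<Sum>k\<in>T1. P k t)" by (rule sum.swap)
    also have "\<bar>\<dots>\<bar> \<le> (\<Sum>t\<in>{1..i}. \<bar>\<Sum>k\<in>T1. P k t\<bar>)" by (rule sum_abs)
    also have "\<dots> \<le> (\<Sum>t\<in>{1..i}. if a + t < qq q c k0 then 1 else 0)"
    proof (rule sum_mono)
      fix t assume "t \<in> {1..i}"
      show "\<bar>\<Sum>k\<in>T1. P k t\<bar> \<le> (if a + t < qq q c k0 then 1 else 0)"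
      proof (cases "a + t < qq q c k0")
        case True
        then show ?thesis using at_most_one[OF y0 fin1(1), of "a+t"] pos unfolding P_def T1_def by auto
      next
        case False
        have "P k t = 0" if "k \<in> T1" for k
        proof -
          have "1 \<le> k" "k < k0" using that pos by (auto simp: T1_def)
          then have "qq q c (Suc k) \<le> qq q c k0" using Q_le_iff[of "Suc k" k0 c] by simp
          then show ?thesis using False by (simp add: P_def)
        qed
        then show ?thesis using False by simp
      qed
    qed
    also have "\<dots> = real (card {t\<in>{1..i}. a + t < qq q c k0})"
      by (simp add: sum.inter_filter[symmetric])
    also have "\<dots> \<le> real (qq q c k0)"
    proof -
      have "{t\<in>{1..i}. a + t < qq q c k0} \<subseteq> {1..<qq q c k0}" by auto
      then have "card {t\<in>{1..i}. a + t < qq q c k0} \<le> card {1..<qq q c k0}" by (intro card_mono) auto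
      then show ?thesis by simp
    qed
    finally show ?thesis .
  qed
  have B: "\<bar>\<Sum>k\<in>T2. \<Sum>t\<in>{1..i}. P k t\<bar> \<le> 2 * real i / real (qq q c k0) + real (Kb i) + 2"
  proof -
    have "\<bar>\<Sum>k\<in>T2. \<Sum>t\<in>{1..i}. P k t\<bar> \<le> (\<Sum>k\<in>T2. \<bar>\<Sum>t\<in>{1..i}. P k t\<bar>)" by (rule sum_abs)
    also have "\<dots> \<le> (\<Sum>k\<in>T2. real i * (1 / real (qq q c k)) + 1)"
    proof (rule sum_mono)
      fix k assume kT: "k \<in> T2"
      then have k1: "1 \<le> k" using pos by (auto simp: T2_def)
      have tr: "\<bar>P k t\<bar> \<le> 1" for t using PP_trit[OF y0, of "a+t"] by (auto simp: P_def)
      have "\<bar>\<Sum>t\<in>{1..i}. P k t\<bar> \<le> real (card {t\<in>{1..i}. P k t \<noteq> 0})"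
        by (rule abs_sum_card) (auto simp: tr)
      also have "card {t\<in>{1..i}. P k t \<noteq> 0} = card {t\<in>{1..i}. (if qq q c k \<le> a+t \<and> a+t < qq q c (Suc k) then y0 (a+t) else 0) \<noteq> 0}"
        by (simp add: P_def)
      also have "\<dots> \<le> i div qq q c k + 1" by (rule block_count[OF y0 k1])
      finally have "\<bar>\<Sum>t\<in>{1..i}. P k t\<bar> \<le> real (i div qq q c k) + 1" by simp
      also have "real (i div qq q c k) \<le> real i / real (qq q c k)" by (rule of_nat_div_le_of_nat)
      finally show "\<bar>\<Sum>t\<in>{1..i}. P k t\<bar> \<le> real i * (1 / real (qq q c k)) + 1" by simp
    qed
    also have "\<dots> = real i * (\<Sum>k\<in>T2. 1 / real (qq q c k)) + real (card T2)"
      by (simp add: sum.distrib sum_distrib_left)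
    also have "\<dots> \<le> real i * (2 / real (qq q c k0)) + real (Kb i + 2)"
    proof (rule add_mono)
      show "real i * (\<Sum>k\<in>T2. 1 / real (qq q c k)) \<le> real i * (2 / real (qq q c k0))"
        using sum_inv_Q[OF fin1(2) _ k0, of c] by (intro mult_left_mono) (auto simp: T2_def)
      have "card T2 \<le> card T" using fin by (intro card_mono) (auto simp: T2_def)
      then show "real (card T2) \<le> real (Kb i + 2)" using card by simp
    qed
    finally show ?thesis by (simp add: algebra_simps)
  qed
  show ?thesis using e A B by linarith
qed

end



lemma inv0: "(\<lambda>n. inverse (real n)) \<longlonglongrightarrow> 0"
  by (rule tendsto_inverse_0_at_top[OF filterlim_real_sequentially])

lemma lim_lnsq:
  fixes c :: nat
  shows "(\<lambda>n. (ln (real (n + c)))^2 / real n) \<longlonglongrightarrow> 0"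
proof -
  have "(\<lambda>n. ln (real n) / real n powr (1/2)) \<longlonglongrightarrow> 0" by (rule lim_ln_over_power) simp
  then have "(\<lambda>n. ln (real (n + c)) / real (n + c) powr (1/2)) \<longlonglongrightarrow> 0"
    by (rule LIMSEQ_ignore_initial_segment)
  then have a: "(\<lambda>n. (ln (real (n + c)) / real (n + c) powr (1/2))^2) \<longlonglongrightarrow> 0"
    using tendsto_power[of _ 0 sequentially 2] by fastforce
  have b: "(\<lambda>n. 1 + real c * inverse (real n)) \<longlonglongrightarrow> 1"
    using tendsto_add[OF tendsto_const tendsto_mult[OF tendsto_const inv0], of 1 "real c"]
    by simp
  have c: "(\<lambda>n. (ln (real (n + c)) / real (n + c) powr (1/2))^2 * (1 + real c * inverse (real n))) \<longlonglongrightarrow> 0 * 1"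
    by (rule tendsto_mult[OF a b])
  have e: "eventually (\<lambda>n. (ln (real (n + c)) / real (n + c) powr (1/2))^2 * (1 + real c * inverse (real n))
      = (ln (real (n + c)))^2 / real n) sequentially"
  proof (rule eventually_sequentiallyI[of 1])
    fix n :: nat assume n: "1 \<le> n"
    have p: "0 < real (n + c)" using n by simp
    have s: "(real (n + c) powr (1/2))^2 = real (n + c)"
      using p by (simp add: powr_half_sqrt)
    have "(ln (real (n + c)) / real (n + c) powr (1/2))^2 = (ln (real (n + c)))^2 / real (n + c)"
      by (simp only: power_divide s)
    moreover have "1 + real c * inverse (real n) = real (n + c) / real n" using n by (simp add: field_simps)
    ultimately show "(ln (real (n + c)) / real (n + c) powr (1/2))^2 * (1 + real c * inverse (real n))
      = (ln (real (n + c)))^2 / real n" using p by simp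
  qed
  show ?thesis using Lim_transform_eventually[OF c e] by simp
qed

lemma ev_small:
  fixes c :: nat and A B \<delta> :: real
  assumes "0 < \<delta>"
  shows "eventually (\<lambda>n. (A + B * (ln (real (n + c)))^2) / real n \<le> \<delta>) sequentially"
proof -
  have "(\<lambda>n. A * inverse (real n) + B * ((ln (real (n + c)))^2 / real n)) \<longlonglongrightarrow> A * 0 + B * 0"
    by (intro tendsto_intros lim_lnsq inv0)
  then have "(\<lambda>n. (A + B * (ln (real (n + c)))^2) / real n) \<longlonglongrightarrow> 0"
    by (simp add: field_simps add_divide_distrib)
  then have "eventually (\<lambda>n. (A + B * (ln (real (n + c)))^2) / real n < \<delta>) sequentially"
    using assms by (rule order_tendstoD(2))
  then show ?thesis by (rule eventually_mono) simp
qed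




definition Gr :: "(nat \<Rightarrow> nat) \<Rightarrow> nat \<Rightarrow> nat \<Rightarrow> real" where
  "Gr q n k0 = real (q (2*k0) + q (2*k0+1)) + 2 * real n / 2 ^ k0 + real (Kb n) + 2"

lemma Kb_mono: "m \<le> n \<Longrightarrow> Kb m \<le> Kb n"
  unfolding Kb_def by (intro card_mono finite_pow_set) auto

lemma Kb_ln: assumes "1 \<le> m" shows "real (Kb m) \<le> 2 * ln (real m)"
proof -
  have ln2: "1/2 \<le> ln (2::real)" using ln_ge_iff[of 2 "1/2"] exp_half_le2 by simp
  have lnm: "0 \<le> ln (real m)" using assms by simp
  have sub: "{k. 1 \<le> k \<and> 2 ^ k \<le> m} \<subseteq> {1..nat \<lfloor>2 * ln (real m)\<rfloor>}"
  proof
    fix k assume k: "k \<in> {k. 1 \<le> k \<and> 2 ^ k \<le> m}"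
    then have "(2::real) ^ k \<le> real m" by (metis (mono_tags) mem_Collect_eq of_nat_le_iff of_nat_numeral of_nat_power)
    then have "ln ((2::real) ^ k) \<le> ln (real m)" using assms by simp
    then have "real k * ln 2 \<le> ln (real m)" by (simp add: ln_realpow)
    then have "real k * (1/2) \<le> ln (real m)" using ln2
      by (meson mult_left_mono of_nat_0_le_iff order.trans)
    then have "real k \<le> 2 * ln (real m)" by simp
    then have "k \<le> nat \<lfloor>2 * ln (real m)\<rfloor>" by (meson le_nat_floor)
    then show "k \<in> {1..nat \<lfloor>2 * ln (real m)\<rfloor>}" using k by simp
  qed
  have "Kb m \<le> nat \<lfloor>2 * ln (real m)\<rfloor>"
    unfolding Kb_def using card_mono[OF _ sub] by simp
  also have "real (nat \<lfloor>2 * ln (real m)\<rfloor>) \<le> 2 * ln (real m)" using lnm by linarith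
  finally show ?thesis by simp
qed

lemma Gr_nonneg: "0 \<le> Gr q n k0" by (simp add: Gr_def)

context qseq
begin

lemma Wd_card:
  "finite {map y [1..<M+1] | y z. (y, z) \<in> XX q c} \<and>
   card {map y [1..<M+1] | y z. (y, z) \<in> XX q c} \<le> (M+2)^(5*(Kb M + 2))"
proof -
  define F where "F ls = map (\<lambda>t. sum_list (map (\<lambda>\<theta>. cb \<theta> t) ls)) [1..<M+1]" for ls
  define LS where "LS = {ls. set ls \<subseteq> Th M \<and> length ls = Kb M + 2}"
  have sub: "{map y [1..<M+1] | y z. (y, z) \<in> XX q c} \<subseteq> F ` LS"
  proof
    fix w assume "w \<in> {map y [1..<M+1] | y z. (y, z) \<in> XX q c}"
    then obtain y z where w: "w = map y [1..<M+1]" and yz: "(y, z) \<in> XX q c" by blast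
    obtain y0 a where y0: "y0 \<in> PP q c" and ya: "\<forall>t. 1 \<le> t \<longrightarrow> t \<le> M \<longrightarrow> y t = y0 (a + t)"
      using XX_rep(3)[OF yz, of M] by blast
    obtain ls where ls: "length ls = Kb M + 2" "set ls \<subseteq> Th M"
      "\<forall>t. 1 \<le> t \<longrightarrow> t \<le> M \<longrightarrow> y0 (a+t) = sum_list (map (\<lambda>\<theta>. cb \<theta> t) ls)"
      using word_rep[OF y0, of M a] by blast
    have "w = F ls" unfolding w F_def using ya ls(3) by (intro map_cong) auto
    moreover have "ls \<in> LS" using ls by (simp add: LS_def)
    ultimately show "w \<in> F ` LS" by blast
  qed
  have finLS: "finite LS" unfolding LS_def by (rule finite_lists_length_eq[OF finite_Th])
  have "card {map y [1..<M+1] | y z. (y, z) \<in> XX q c} \<le> card (F ` LS)"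
    using sub finLS by (intro card_mono) auto
  also have "\<dots> \<le> card LS" using finLS by (rule card_image_le)
  also have "\<dots> = ((M+2)^5)^(Kb M + 2)" unfolding LS_def by (simp add: card_lists_length_eq finite_Th card_Th)
  also have "\<dots> = (M+2)^(5*(Kb M + 2))" by (simp only: power_mult)
  finally show ?thesis using sub finLS finite_subset by blast
qed

lemma XX_drift:
  assumes yz: "(y, z) \<in> XX q c" and k0: "1 \<le> k0" and i: "i \<le> n"
  shows "\<bar>\<Sum>t\<in>{1..i}. real_of_int (y t)\<bar> \<le> Gr q n k0"
proof -
  obtain y0 a where y0: "y0 \<in> PP q c" and ya: "\<forall>t. 1 \<le> t \<longrightarrow> t \<le> i \<longrightarrow> y t = y0 (a + t)"
    using XX_rep(3)[OF yz, of i] by blast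
  have "(\<Sum>t\<in>{1..i}. real_of_int (y t)) = (\<Sum>t\<in>{1..i}. real_of_int (y0 (a+t)))"
    using ya by (intro sum.cong) auto
  then have "\<bar>\<Sum>t\<in>{1..i}. real_of_int (y t)\<bar> \<le> real (qq q c k0) + 2 * real i / real (qq q c k0) + real (Kb i) + 2"
    using drift[OF y0 k0, where i=i and a=a] by simp
  also have "\<dots> \<le> Gr q n k0"
  proof -
    have a1: "real (qq q c k0) \<le> real (q (2*k0) + q (2*k0+1))" using Q_ub[of c k0] by linarith
    have p: "(2::real) ^ k0 \<le> real (qq q c k0)" using Q_pow[OF k0, of c]
      by (metis of_nat_le_iff of_nat_numeral of_nat_power)
    have a2: "2 * real i / real (qq q c k0) \<le> 2 * real n / 2 ^ k0"
      using p i by (intro frac_le) auto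
    have a3: "real (Kb i) \<le> real (Kb n)" using Kb_mono[OF i] by simp
    show ?thesis unfolding Gr_def using a1 a2 a3 by linarith
  qed
  finally show ?thesis .
qed

lemma comp_close:
  assumes yz: "(y, z) \<in> XX q c" and yz': "(y', z') \<in> XX q c" and k0: "1 \<le> k0"
    and ey: "map y [1..<n+r+1] = map y' [1..<n+r+1]"
    and ez: "map z [-int (nat \<lceil>Gr q n k0\<rceil> + r)..int (nat \<lceil>Gr q n k0\<rceil> + r)] =
             map z' [-int (nat \<lceil>Gr q n k0\<rceil> + r)..int (nat \<lceil>Gr q n k0\<rceil> + r)]"
    and i: "i < n"
  shows "dZ ((Tmap ^^ i) (y, z)) ((Tmap ^^ i) (y', z')) \<le> (1/3)^(Suc r)"
proof -
  define G where "G = nat \<lceil>Gr q n k0\<rceil>"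
  have y0: "y 0 = 0" "y' 0 = 0" using XX_rep(1)[OF yz] XX_rep(1)[OF yz'] by (auto simp: trits1_def)
  have agy: "y t = y' t" if "1 \<le> t" "t \<le> n + r" for t
    using ey that by (auto simp: map_eq_conv)
  have agz: "z m = z' m" if "\<bar>m\<bar> \<le> int (G + r)" for m
    using ez that unfolding G_def[symmetric] by (auto simp: map_eq_conv abs_le_iff)
  define s where "s = (\<Sum>t\<in>{1..i}. y t)"
  have s': "(\<Sum>t\<in>{1..i}. y' t) = s" unfolding s_def using agy i by (intro sum.cong) auto
  have "\<bar>\<Sum>t\<in>{1..i}. real_of_int (y t)\<bar> \<le> Gr q n k0" using XX_drift[OF yz k0] i by simp
  then have "real_of_int \<bar>s\<bar> \<le> Gr q n k0" unfolding s_def by (simp only: of_int_abs of_int_sum)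
  also have "\<dots> \<le> real_of_int \<lceil>Gr q n k0\<rceil>" by (rule le_of_int_ceiling)
  finally have "\<bar>s\<bar> \<le> \<lceil>Gr q n k0\<rceil>" by (simp only: of_int_le_iff)
  moreover have "0 \<le> \<lceil>Gr q n k0\<rceil>" using Gr_nonneg[of q n k0] by simp
  ultimately have sG: "\<bar>s\<bar> \<le> int G" unfolding G_def by simp
  have T: "(Tmap ^^ i) (y, z) = ((\<lambda>m. if m = 0 then 0 else y (m + i)), shl2 s z)"
    using Tmap_pow[of "(y, z)" i] y0 by (auto simp: s_def fun_eq_iff)
  have T': "(Tmap ^^ i) (y', z') = ((\<lambda>m. if m = 0 then 0 else y' (m + i)), shl2 s z')"
    using Tmap_pow[of "(y', z')" i] y0 s' by (auto simp: fun_eq_iff)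
  have d1: "d1 (\<lambda>m. if m = 0 then 0 else y (m + i)) (\<lambda>m. if m = 0 then 0 else y' (m + i)) \<le> (1/3)^(Suc r)"
    by (rule d1_le) (use agy i in auto)
  have d2: "d2 (shl2 s z) (shl2 s z') \<le> (1/3)^(Suc r)"
  proof (rule d2_le, intro allI impI)
    fix m assume "\<bar>m\<bar> \<le> int r"
    then have "\<bar>m + s\<bar> \<le> int (G + r)" using sG by linarith
    then show "shl2 s z m = shl2 s z' m" using agz by (simp add: shl2_def)
  qed
  show ?thesis unfolding T T' dZ_def using d1 d2 by simp
qed

end



context qseq
begin

lemma max_sep_bound:
  assumes r: "(1/3::real)^(Suc r) \<le> \<epsilon>" and k0: "1 \<le> k0"
  shows "max_sep dX That (Xhat q) n \<epsilon> \<le>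
     4 * (((n+r)+2)^(5*(Kb (n+r) + 2)) * 3^(2*(nat \<lceil>Gr q n k0\<rceil> + r)+1))^4"
proof -
  define G where "G = nat \<lceil>Gr q n k0\<rceil>"
  define R where "R = int (G + r)"
  define D where "D p = (map (fst p) [1..<n+r+1], map (snd p) [-R..R])" for p :: zpt
  define W where "W c = {map y [1..<(n+r)+1] | y z. (y, z) \<in> XX q c}" for c
  define Zl where "Zl = {l. set l \<subseteq> {-1,0,1::int} \<and> length l = 2*(G+r)+1}"
  define \<phi> where "\<phi> x = (case x of (a,b,c,e,j) \<Rightarrow> (j, D a, D b, D c, D e))" for x :: xpt
  define Tg where "Tg = {0..3::nat} \<times> (W 0 \<times> Zl) \<times> (W 1 \<times> Zl) \<times> (W 2 \<times> Zl) \<times> (W 3 \<times> Zl)"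
  define B where "B = ((n+r)+2)^(5*(Kb (n+r) + 2)) * 3^(2*(G+r)+1)"
  have finW: "finite (W c)" for c using Wd_card[of "n+r" c] by (simp add: W_def)
  have cardW: "card (W c) \<le> ((n+r)+2)^(5*(Kb (n+r)+2))" for c using Wd_card[of "n+r" c] by (simp add: W_def)
  have finZ: "finite Zl" unfolding Zl_def by (rule finite_lists_length_eq) simp
  have c3: "card {-1,0,1::int} = 3" by simp
  have cardZ: "card Zl = 3^(2*(G+r)+1)" unfolding Zl_def using card_lists_length_eq[of "{-1,0,1::int}" "2*(G+r)+1"] c3 by simp
  have cWZ: "card (W c \<times> Zl) \<le> B" for c
    unfolding card_cartesian_product B_def cardZ using cardW[of c] by (rule mult_le_mono1)
  have finTg: "finite Tg" unfolding Tg_def using finW finZ by auto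
  have cardTg: "card Tg \<le> 4 * B^4"
  proof -
    have "card Tg = 4 * (card (W 0 \<times> Zl) * (card (W 1 \<times> Zl) * (card (W 2 \<times> Zl) * card (W 3 \<times> Zl))))"
      unfolding Tg_def by (simp only: card_cartesian_product) simp
    also have "\<dots> \<le> 4 * (B * (B * (B * B)))"
      using cWZ by (intro mult_le_mono le_refl) auto
    finally show ?thesis by (simp add: power4_eq_xxxx mult.assoc)
  qed
  have DinW: "D p \<in> W c \<times> Zl" if "p \<in> XX q c" for p c
  proof (cases p)
    case (Pair y z)
    have z: "z \<in> trits2" using XX_rep(2) that Pair by blast
    have "map y [1..<n+r+1] \<in> W c" using that Pair by (auto simp: W_def)
    moreover have "map z [-R..R] \<in> Zl" using z by (auto simp: Zl_def trits2_def R_def)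
    ultimately show ?thesis by (simp add: D_def Pair)
  qed
  have cc: "dZ ((Tmap ^^ i) p) ((Tmap ^^ i) p') \<le> (1/3)^(Suc r)"
    if "p \<in> XX q c" "p' \<in> XX q c" "D p = D p'" "i < n" for p p' c i
  proof (cases p, cases p')
    fix y z y' z' assume pp: "p = (y, z)" "p' = (y', z')"
    show ?thesis unfolding pp
      by (rule comp_close[OF _ _ k0]) (use that pp in \<open>auto simp: D_def R_def G_def\<close>)
  qed
  have sep: "card S \<le> 4 * B^4" if S: "separated_set dX That (Xhat q) n \<epsilon> S" for S
  proof -
    have SX: "S \<subseteq> Xhat q" and finS: "finite S"
      and sc: "\<forall>x\<in>S. \<forall>y\<in>S. x \<noteq> y \<longrightarrow> (\<exists>i<n. \<epsilon> < dX ((That ^^ i) x) ((That ^^ i) y))"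
      using S by (auto simp: separated_set_def)
    have img: "\<phi> ` S \<subseteq> Tg"
    proof
      fix u assume "u \<in> \<phi> ` S"
      then obtain x where x: "x \<in> S" "u = \<phi> x" by blast
      obtain a b c e j where xe: "x = (a, b, c, e, j)" by (cases x) auto
      have "a \<in> XX q 0" "b \<in> XX q 1" "c \<in> XX q 2" "e \<in> XX q 3" "j \<in> {0,1,2,3}"
        using SX x xe by (auto simp: Xhat_def)
      then show "u \<in> Tg" using DinW x xe by (auto simp: Tg_def \<phi>_def)
    qed
    have inj: "inj_on \<phi> S"
    proof (rule inj_onI, rule ccontr)
      fix x x' assume x: "x \<in> S" and x': "x' \<in> S" and e: "\<phi> x = \<phi> x'" and ne: "x \<noteq> x'"
      obtain i where i: "i < n" and gt: "\<epsilon> < dX ((That ^^ i) x) ((That ^^ i) x')" using sc x x' ne by blast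
      obtain a b c d j where xe: "x = (a, b, c, d, j)" by (cases x) auto
      obtain a' b' c' d' j' where xe': "x' = (a', b', c', d', j')" by (cases x') auto
      have m: "a \<in> XX q 0" "b \<in> XX q 1" "c \<in> XX q 2" "d \<in> XX q 3"
        "a' \<in> XX q 0" "b' \<in> XX q 1" "c' \<in> XX q 2" "d' \<in> XX q 3"
        using SX x x' xe xe' by (auto simp: Xhat_def)
      have eq: "j = j'" "D a = D a'" "D b = D b'" "D c = D c'" "D d = D d'"
        using e xe xe' by (auto simp: \<phi>_def)
      define bb where "bb = (1/3::real)^(Suc r)"
      have b0: "0 \<le> bb" by (simp add: bb_def)
      have c1: "dZ ((Tmap ^^ i) a) ((Tmap ^^ i) a') \<le> bb" unfolding bb_def by (rule cc[OF m(1) m(5) eq(2) i])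
      have c2: "dZ ((Tmap ^^ i) b) ((Tmap ^^ i) b') \<le> bb" unfolding bb_def by (rule cc[OF m(2) m(6) eq(3) i])
      have c3: "dZ ((Tmap ^^ i) c) ((Tmap ^^ i) c') \<le> bb" unfolding bb_def by (rule cc[OF m(3) m(7) eq(4) i])
      have c4: "dZ ((Tmap ^^ i) d) ((Tmap ^^ i) d') \<le> bb" unfolding bb_def by (rule cc[OF m(4) m(8) eq(5) i])
      have "dX ((That ^^ i) x) ((That ^^ i) x') \<le> bb"
        unfolding xe xe' That_pow dX_def using c1 c2 c3 c4 b0 eq(1)
        by (simp add: max.bounded_iff)
      then show False using gt r unfolding bb_def by linarith
    qed
    have "card S = card (\<phi> ` S)" using inj by (simp add: card_image)
    also have "\<dots> \<le> card Tg" using img finTg by (rule card_mono[rotated])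
    also have "\<dots> \<le> 4 * B^4" by (rule cardTg)
    finally show ?thesis .
  qed
  have ne: "{card S | S. separated_set dX That (Xhat q) n \<epsilon> S} \<noteq> {}"
    by (auto simp: separated_set_def intro!: exI[of _ "{}"])
  have "max_sep dX That (Xhat q) n \<epsilon> \<le> 4 * B^4"
    unfolding max_sep_def using sep by (intro cSup_least[OF ne]) blast
  then show ?thesis by (simp add: B_def G_def)
qed

end



lemma lin_aux: fixes p L s l3 l4 Hk X r :: real
 assumes "p * L \<le> 10 * L^2 + 10 * L" "s * l3 \<le> 2 * (2 * Hk + 4 * X + 4 * L + 2 * r + 7)" "l4 \<le> 3" "L \<le> 1 + L^2"
 shows "l4 + 4 * (p * L + s * l3) \<le> 75 + 8 * (2 * Hk + 2 * r + 7) + 112 * L^2 + 32 * X"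
  using assms by simp

context qseq
begin

lemma ln_bound:
  assumes r: "(1/3::real)^(Suc r) \<le> \<epsilon>" and k0: "1 \<le> k0" and n: "1 \<le> n"
  shows "ln (real (max_sep dX That (Xhat q) n \<epsilon>)) / real n \<le>
    (75 + 8 * (2 * real (q (2*k0) + q (2*k0+1)) + 2 * real r + 7) + 112 * (ln (real (n + (r + 2))))^2) / real n
    + 32 / 2 ^ k0"
proof -
  define M where "M = n + r"
  define G where "G = nat \<lceil>Gr q n k0\<rceil>"
  define Hk where "Hk = real (q (2*k0) + q (2*k0+1))"
  define L where "L = ln (real (n + (r + 2)))"
  define p where "p = 5 * (Kb M + 2)"
  define s where "s = 2 * (G + r) + 1"
  define N where "N = 4 * ((M+2)^p * 3^s)^4"
  have ms: "max_sep dX That (Xhat q) n \<epsilon> \<le> N"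
    using max_sep_bound[OF r k0, of n] by (simp add: N_def M_def p_def s_def G_def)
  have Npos: "0 < N" by (simp add: N_def)
  have lnms: "ln (real (max_sep dX That (Xhat q) n \<epsilon>)) \<le> ln (real N)"
  proof (cases "max_sep dX That (Xhat q) n \<epsilon> = 0")
    case True
    then show ?thesis using Npos by simp
  next
    case False
    then show ?thesis using ms Npos by simp
  qed
  have LM: "ln (real (M + 2)) = L" by (simp add: L_def M_def add.assoc)
  have lnN: "ln (real N) = ln 4 + 4 * (real p * L + real s * ln 3)"
  proof -
    have "real N = 4 * ((real (M+2))^p * 3^s)^4" by (simp add: N_def)
    then have "ln (real N) = ln 4 + ln (((real (M+2))^p * 3^s)^4)" by (simp add: ln_mult)
    also have "ln (((real (M+2))^p * 3^s)^4) = 4 * ln ((real (M+2))^p * 3^s)" by (simp add: ln_realpow)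
    also have "ln ((real (M+2))^p * 3^s) = real p * ln (real (M+2)) + real s * ln 3"
      by (simp add: ln_mult ln_realpow)
    finally show ?thesis using LM by simp
  qed
  have L0: "0 \<le> L" by (simp add: L_def)
  have LL: "L \<le> 1 + L^2" by (simp add: power2_eq_square) (smt (verit) mult_nonneg_nonneg L0 mult_le_cancel_left1)
  have ln3: "0 \<le> ln (3::real)" "ln (3::real) \<le> 2" using ln_le_minus_one[of 3] by auto
  have ln4: "ln (4::real) \<le> 3" using ln_le_minus_one[of 4] by auto
  have KM: "real (Kb M) \<le> 2 * L"
  proof -
    have "real (Kb M) \<le> 2 * ln (real M)" using Kb_ln[of M] n by (simp add: M_def)
    also have "ln (real M) \<le> L" unfolding L_def M_def using n by simp
    finally show ?thesis by simp
  qed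
  have Kn: "real (Kb n) \<le> 2 * L"
  proof -
    have "real (Kb n) \<le> 2 * ln (real n)" using Kb_ln[of n] n by simp
    also have "ln (real n) \<le> L" unfolding L_def using n by simp
    finally show ?thesis by simp
  qed
  have Gb: "real G \<le> Hk + 2 * real n / 2^k0 + 2 * L + 3"
  proof -
    have "real G = real_of_int \<lceil>Gr q n k0\<rceil>" unfolding G_def using Gr_nonneg[of q n k0] by simp
    also have "\<dots> \<le> Gr q n k0 + 1" by linarith
    finally show ?thesis using Kn unfolding Gr_def Hk_def by linarith
  qed
  have t1: "real p * L \<le> (10 * L + 10) * L"
  proof -
    have "real p \<le> 10 * L + 10" using KM by (simp add: p_def)
    then show ?thesis using L0 by (rule mult_right_mono)
  qed
  have nn: "0 \<le> 2 * real n / 2^k0" by simp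
  have Hk0: "0 \<le> Hk" by (simp add: Hk_def)
  have t2: "real s * ln 3 \<le> 2 * (2 * Hk + 4 * (real n / 2^k0) + 4 * L + 2 * real r + 7)"
  proof -
    have s1: "real s \<le> 2 * Hk + 4 * (real n / 2^k0) + 4 * L + 2 * real r + 7" using Gb by (simp add: s_def)
    have s0: "0 \<le> 2 * Hk + 4 * (real n / 2^k0) + 4 * L + 2 * real r + 7" using Hk0 L0 by simp
    have "real s * ln 3 \<le> (2 * Hk + 4 * (real n / 2^k0) + 4 * L + 2 * real r + 7) * ln 3"
      using s1 ln3(1) by (rule mult_right_mono)
    also have "\<dots> \<le> (2 * Hk + 4 * (real n / 2^k0) + 4 * L + 2 * real r + 7) * 2"
      using ln3(2) s0 by (rule mult_left_mono)
    finally show ?thesis by simp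
  qed
  have lnNb: "ln (real N) \<le> 75 + 8 * (2 * Hk + 2 * real r + 7) + 112 * L^2 + 32 * real n / 2^k0"
  proof -
    have t1': "real p * L \<le> 10 * L^2 + 10 * L" using t1 by (simp add: power2_eq_square algebra_simps)
    have nd: "32 * real n / 2^k0 = 32 * (real n / 2^k0)" by simp
    show ?thesis unfolding lnN nd using lin_aux[OF t1' t2 ln4 LL] .
  qed
  then have "ln (real (max_sep dX That (Xhat q) n \<epsilon>)) \<le> (75 + 8 * (2 * Hk + 2 * real r + 7) + 112 * L^2) + real n * (32 / 2^k0)"
  proof -
    have eq: "32 * real n / 2^k0 = real n * (32 / 2^k0)" by simp
    show ?thesis using lnms lnNb eq by linarith
  qed
  then have "ln (real (max_sep dX That (Xhat q) n \<epsilon>)) / real n \<le> ((75 + 8 * (2 * Hk + 2 * real r + 7) + 112 * L^2) + real n * (32 / 2^k0)) / real n"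
    using n by (simp add: divide_right_mono)
  also have "\<dots> = (75 + 8 * (2 * Hk + 2 * real r + 7) + 112 * L^2) / real n + 32 / 2^k0"
    using n by (simp add: add_divide_distrib)
  finally show ?thesis by (simp add: Hk_def L_def)
qed

end

theorem mainTheorem9:
  fixes \<tau> :: "nat \<Rightarrow> real" and q :: "nat \<Rightarrow> nat"
  assumes tau_pos: "\<forall>n\<ge>1. \<tau> n > 0"
    and tau_mono: "\<forall>m n. 1 \<le> m \<longrightarrow> m \<le> n \<longrightarrow> \<tau> n \<le> \<tau> m"
    and tau_lim: "\<tau> \<longlonglongrightarrow> 0"
    and q1: "2 \<le> q 1"
    and q_incr: "\<forall>k\<ge>1. q k < q (Suc k)"
    and q_growth: "\<forall>k\<ge>1. q (Suc k) > q k ^ 4 + 3 * q k"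
    and q_tau: "\<forall>k\<ge>1. \<tau> (nat \<lceil>real (q (Suc k)) / 3\<rceil>) < 1 / (16 * real (q k))"
  shows "topological_entropy dX That (Xhat q) = 0"
proof -
  have q4: "\<forall>k\<ge>1. 4 * q k < q (Suc k)"
  proof (intro allI impI)
    fix k :: nat assume k: "1 \<le> k"
    have "q k \<le> q k ^ 4" by (cases "q k") (auto intro: self_le_power)
    then show "4 * q k < q (Suc k)" using q_growth k by fastforce
  qed
  interpret qseq q using q1 q4 by unfold_locales
  have lim0: "limsup (\<lambda>n. ereal (ln (real (max_sep dX That (Xhat q) n \<epsilon>)) / real n)) = 0"
    if \<epsilon>: "0 < \<epsilon>" for \<epsilon>
  proof (rule antisym)
    show "limsup (\<lambda>n. ereal (ln (real (max_sep dX That (Xhat q) n \<epsilon>)) / real n)) \<le> 0"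
    proof (rule ereal_le_epsilon2)
      fix \<delta> :: real assume \<delta>: "0 < \<delta>"
      obtain r0 where r0: "(1/3::real)^r0 < \<epsilon>" using real_arch_pow_inv[OF \<epsilon>, of "1/3"] by auto
      have r: "(1/3::real)^(Suc r0) \<le> \<epsilon>"
        using r0 power_decreasing[of r0 "Suc r0" "1/3::real"] by linarith
      obtain k1 where k1: "64 / \<delta> < (2::real)^k1" using real_arch_pow[of 2 "64/\<delta>"] by auto
      define k0 where "k0 = Suc k1"
      have k0: "1 \<le> k0" by (simp add: k0_def)
      have k0b: "64 / \<delta> \<le> (2::real)^k0"
      proof -
        have "(0::real) \<le> 2^k1" by simp
        then show ?thesis using k1 unfolding k0_def by (simp only: power_Suc)
      qed
      have small: "32 / (2::real)^k0 \<le> \<delta> / 2"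
      proof -
        have "64 \<le> \<delta> * 2^k0" using k0b \<delta> by (simp add: divide_le_eq mult.commute)
        then show ?thesis by (simp add: divide_le_eq)
      qed
      define A where "A = 75 + 8 * (2 * real (q (2*k0) + q (2*k0+1)) + 2 * real r0 + 7)"
      have ev1: "eventually (\<lambda>n. (A + 112 * (ln (real (n + (r0 + 2))))^2) / real n \<le> \<delta> / 2) sequentially"
        using ev_small[of "\<delta>/2" A 112 "r0 + 2"] \<delta> by simp
      have ev: "eventually (\<lambda>n. ereal (ln (real (max_sep dX That (Xhat q) n \<epsilon>)) / real n) \<le> ereal \<delta>) sequentially"
        using ev1 eventually_ge_at_top[of "1::nat"]
      proof (eventually_elim)
        case (elim n)
        have "ln (real (max_sep dX That (Xhat q) n \<epsilon>)) / real n \<le>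
          (A + 112 * (ln (real (n + (r0 + 2))))^2) / real n + 32 / 2 ^ k0"
          using ln_bound[OF r k0 elim(2)] unfolding A_def .
        then show ?case using elim(1) small by (simp only: ereal_less_eq(3))
      qed
      have "limsup (\<lambda>n. ereal (ln (real (max_sep dX That (Xhat q) n \<epsilon>)) / real n)) \<le> ereal \<delta>"
        by (rule Limsup_bounded[OF ev])
      then show "limsup (\<lambda>n. ereal (ln (real (max_sep dX That (Xhat q) n \<epsilon>)) / real n)) \<le> 0 + ereal \<delta>"
        by simp
    qed
    have "\<forall>\<^sub>F n in sequentially. 0 \<le> ereal (ln (real (max_sep dX That (Xhat q) n \<epsilon>)) / real n)"
    proof (rule always_eventually, rule allI)
      fix n
      have "0 \<le> ln (real (max_sep dX That (Xhat q) n \<epsilon>))"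
        by (cases "max_sep dX That (Xhat q) n \<epsilon> = 0") auto
      then show "0 \<le> ereal (ln (real (max_sep dX That (Xhat q) n \<epsilon>)) / real n)" by simp
    qed
    then show "0 \<le> limsup (\<lambda>n. ereal (ln (real (max_sep dX That (Xhat q) n \<epsilon>)) / real n))"
      by (intro le_Limsup) simp_all
  qed
  have im: "(\<lambda>\<epsilon>. limsup (\<lambda>n. ereal (ln (real (max_sep dX That (Xhat q) n \<epsilon>)) / real n))) ` {0<..}
      = (\<lambda>\<epsilon>::real. 0::ereal) ` {0<..}"
    by (rule image_cong) (auto simp: lim0)
  have ne: "({0<..} :: real set) \<noteq> {}" by auto
  have "topological_entropy dX That (Xhat q) = Sup ((\<lambda>\<epsilon>::real. 0::ereal) ` {0<..})"
    unfolding topological_entropy_def im ..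
  also have "\<dots> = 0" using ne by simp
  finally show ?thesis .
qed

end
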